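(* Let $\Phi$ be a channel matrix whose rows $P^1,\dots,P^4\in\Delta^n$ are in general position, let $Q^0$ be the equidistant point from $P^1,\dots,P^4$ with barycentric coordinate $\boldsymbol\lambda^0$, and suppose $\lambda^0_1<0$, $\lambda^0_2<0$, $\lambda^0_3\ge0$, $\lambda^0_4\ge0$. Let $Q^{1(1)}=\pi(Q^0|L(P^2,P^3,P^4))$ and $Q^{1(2)}=\pi(Q^0|L(P^1,P^3,P^4))$ with barycentric coordinates $\boldsymbol\lambda^{1(1)},\boldsymbol\lambda^{1(2)}$ about $P^1,\dots,P^4$, and suppose $\lambda^{1(2)}_1<0$. If moreover $\lambda^{1(1)}_2,\lambda^{1(1)}_3,\lambda^{1(1)}_4\ge0$, then the output distribution achieving the channel capacity is $Q^\ast=Q^{1(1)}$ and the channel capacity is $C=D(P^2\|Q^{1(1)})$.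
   Context: $\Delta^n=\{Q:Q_j>0,\sum_jQ_j=1\}$, $\bar\Delta^m=\{\boldsymbol\lambda:\lambda_i\ge0,\sum_i\lambda_i=1\}$; $D(Q\|Q')=\sum_jQ_j\log(Q_j/Q'_j)$. Rows are in general position if $P^2-P^1,\dots,P^m-P^1$ are linearly independent. $L(S^1,\dots,S^r)=\{\sum_i\lambda_iS^i:\sum_i\lambda_i=1\}\cap\Delta^n$; for such an affine subspace $L$, $\pi(Q'|L)$ is the unique $Q\in L$ minimizing $D(Q\|Q')$. The barycentric coordinate of $Q\in L(P^1,\dots,P^m)$ is the unique $\boldsymbol\lambda$ with $\sum_i\lambda_i=1$, $Q=\sum_i\lambda_iP^i$. The equidistant point is the unique $Q^0\in L(P^1,\dots,P^m)$ with all $D(P^i\|Q^0)$ equal. Mutual information $I(\boldsymbol\lambda,\Phi)=\sum_{i,j}\lambda_iP^i_j\log(P^i_j/Q_j)$ with $Q=\boldsymbol\lambda\Phi$; capacity $C=\max_{\boldsymbol\lambda\in\bar\Delta^m}I(\boldsymbol\lambda,\Phi)$; the capacity-achieving output distribution is $Q^\ast=\boldsymbol\lambda^\ast\Phi$ for a maximizer $\boldsymbol\lambda^\ast$ (unique). *)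

theory Defs
  imports "HOL-Analysis.Analysis"
begin

text \<open>Channel with rows P 1, ..., P m (indices 1..m), each a vector in real^'n.\<close>

definition open_simplex :: "(real ^ 'n) set" where
  "open_simplex = {Q. (\<forall>j. Q $ j > 0) \<and> (\<Sum>j\<in>UNIV. Q $ j) = 1}"

definition closed_simplex :: "nat \<Rightarrow> (nat \<Rightarrow> real) set" where
  "closed_simplex m = {lam. (\<forall>i\<in>{1..m}. lam i \<ge> 0) \<and> (\<Sum>i\<in>{1..m}. lam i) = 1}"

definition KL :: "real ^ 'n \<Rightarrow> real ^ 'n \<Rightarrow> real" where
  "KL Q Q' = (\<Sum>j\<in>UNIV. Q $ j * ln (Q $ j / Q' $ j))"

definition general_position :: "nat \<Rightarrow> (nat \<Rightarrow> real ^ 'n) \<Rightarrow> bool" where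
  "general_position m P \<longleftrightarrow>
     (\<forall>c. (\<Sum>i\<in>{2..m}. c i *\<^sub>R (P i - P 1)) = 0 \<longrightarrow> (\<forall>i\<in>{2..m}. c i = 0))"

definition affL :: "(nat \<Rightarrow> real ^ 'n) \<Rightarrow> nat set \<Rightarrow> (real ^ 'n) set" where
  "affL S I = {Q. \<exists>c. (\<Sum>i\<in>I. c i) = 1 \<and> Q = (\<Sum>i\<in>I. c i *\<^sub>R S i)} \<inter> open_simplex"

definition is_proj :: "real ^ 'n \<Rightarrow> (real ^ 'n) set \<Rightarrow> real ^ 'n \<Rightarrow> bool" where
  "is_proj Q' L Q \<longleftrightarrow> Q \<in> L \<and> (\<forall>R\<in>L. KL Q Q' \<le> KL R Q')"

definition is_bary :: "nat \<Rightarrow> (nat \<Rightarrow> real ^ 'n) \<Rightarrow> real ^ 'n \<Rightarrow> (nat \<Rightarrow> real) \<Rightarrow> bool" where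
  "is_bary m P Q lam \<longleftrightarrow> (\<Sum>i\<in>{1..m}. lam i) = 1 \<and> Q = (\<Sum>i\<in>{1..m}. lam i *\<^sub>R P i)"

definition is_equidistant :: "nat \<Rightarrow> (nat \<Rightarrow> real ^ 'n) \<Rightarrow> real ^ 'n \<Rightarrow> bool" where
  "is_equidistant m P Q \<longleftrightarrow> Q \<in> affL P {1..m} \<and> (\<forall>i\<in>{1..m}. \<forall>k\<in>{1..m}. KL (P i) Q = KL (P k) Q)"

definition out_dist :: "nat \<Rightarrow> (nat \<Rightarrow> real ^ 'n) \<Rightarrow> (nat \<Rightarrow> real) \<Rightarrow> real ^ 'n" where
  "out_dist m P lam = (\<Sum>i\<in>{1..m}. lam i *\<^sub>R P i)"

definition mutual_info :: "nat \<Rightarrow> (nat \<Rightarrow> real ^ 'n) \<Rightarrow> (nat \<Rightarrow> real) \<Rightarrow> real" where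
  "mutual_info m P lam =
     (\<Sum>i\<in>{1..m}. \<Sum>j\<in>UNIV. lam i * P i $ j * ln (P i $ j / out_dist m P lam $ j))"

definition capacity :: "nat \<Rightarrow> (nat \<Rightarrow> real ^ 'n) \<Rightarrow> real" where
  "capacity m P = (SUP lam\<in>closed_simplex m. mutual_info m P lam)"

definition is_capacity_achieving :: "nat \<Rightarrow> (nat \<Rightarrow> real ^ 'n) \<Rightarrow> (nat \<Rightarrow> real) \<Rightarrow> bool" where
  "is_capacity_achieving m P lam \<longleftrightarrow> lam \<in> closed_simplex m \<and>
     (\<forall>mu\<in>closed_simplex m. mutual_info m P mu \<le> mutual_info m P lam)"

end

theory Submission
  imports Defs
begin

lemma term_ge:
  fixes q r :: real assumes "q > 0" "r > 0"
  shows "q * ln (q / r) \<ge> q - r" and "r \<noteq> q \<Longrightarrow> q * ln (q / r) > q - r"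
proof -
  have e: "q * ln (q / r) = - (q * ln (r / q))"
    using assms by (simp add: ln_div algebra_simps)
  have l: "ln (r/q) \<le> r/q - 1" using assms by (intro ln_le_minus_one) simp
  have m: "q * (r/q - 1) = r - q" using assms by (simp add: field_simps)
  have "q * ln (r/q) \<le> q * (r/q - 1)" using l assms by (intro mult_left_mono) auto
  then show "q * ln (q / r) \<ge> q - r" using e m by linarith
  assume ne: "r \<noteq> q"
  have "ln (r/q) \<noteq> r/q - 1"
  proof
    assume "ln (r/q) = r/q - 1"
    then have "r/q = 1" using assms by (intro ln_eq_minus_one) auto
    then show False using ne assms by simp
  qed
  then have "ln (r/q) < r/q - 1" using l by linarith
  then have "q * ln (r/q) < q * (r/q - 1)" using assms by (intro mult_strict_left_mono) auto
  then show "q * ln (q / r) > q - r" using e m by linarith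
qed

lemma gibbs:
  fixes Q R :: "real ^ 'n"
  assumes Q: "Q \<in> open_simplex" and R: "R \<in> open_simplex"
  shows "KL Q R \<ge> 0" and "KL Q R = 0 \<Longrightarrow> Q = R"
proof -
  have qp: "\<And>j. Q $ j > 0" and qs: "(\<Sum>j\<in>UNIV. Q $ j) = 1"
    using Q by (auto simp: open_simplex_def)
  have rp: "\<And>j. R $ j > 0" and rs: "(\<Sum>j\<in>UNIV. R $ j) = 1"
    using R by (auto simp: open_simplex_def)
  have z: "(\<Sum>j\<in>UNIV. Q $ j - R $ j) = 0" using qs rs by (simp add: sum_subtractf)
  have "(\<Sum>j\<in>UNIV. Q $ j - R $ j) \<le> KL Q R"
    unfolding KL_def by (intro sum_mono term_ge qp rp)
  then show "KL Q R \<ge> 0" using z by simp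
  assume k0: "KL Q R = 0"
  show "Q = R"
  proof (rule ccontr)
    assume "Q \<noteq> R"
    then obtain j where "Q $ j \<noteq> R $ j" by (metis vec_eq_iff)
    then have "Q $ j - R $ j < Q $ j * ln (Q $ j / R $ j)" by (intro term_ge qp rp) auto
    then have "(\<Sum>j\<in>UNIV. Q $ j - R $ j) < KL Q R"
      unfolding KL_def by (intro sum_strict_mono_ex1) (auto intro!: term_ge qp rp)
    then show False using z k0 by simp
  qed
qed

lemma dterm:
  fixes q a v :: real assumes "q > 0" "a > 0"
  shows "((\<lambda>t. (q + t * v) * ln ((q + t * v)/a)) has_field_derivative (v * ln (q/a) + v)) (at 0)"
  using assms by (auto intro!: derivative_eq_intros simp: field_simps)

lemma proj_orth:
  fixes P :: "nat \<Rightarrow> real^'n"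
  assumes pr: "is_proj Q0 (affL P I) Q" and Q0: "Q0 \<in> open_simplex" and fin: "finite I"
    and k: "k \<in> I" and Pk: "P k \<in> open_simplex"
  shows "(\<Sum>j\<in>UNIV. (P k $ j - Q $ j) * ln (Q $ j / Q0 $ j)) = 0"
proof -
  from pr obtain c where c1: "(\<Sum>i\<in>I. c i) = 1" and cQ: "Q = (\<Sum>i\<in>I. c i *\<^sub>R P i)"
    and Qs: "Q \<in> open_simplex" and mn: "\<forall>R\<in>affL P I. KL Q Q0 \<le> KL R Q0"
    unfolding is_proj_def affL_def by auto
  have qp: "\<And>j. Q $ j > 0" and qs: "(\<Sum>j\<in>UNIV. Q $ j) = 1"
    using Qs by (auto simp: open_simplex_def)
  have q0p: "\<And>j. Q0 $ j > 0" using Q0 by (auto simp: open_simplex_def)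
  have pp: "\<And>j. P k $ j > 0" and ps: "(\<Sum>j\<in>UNIV. P k $ j) = 1"
    using Pk by (auto simp: open_simplex_def)
  have ple: "P k $ j \<le> 1" for j
  proof -
    have "P k $ j \<le> (\<Sum>j\<in>UNIV. P k $ j)"
      by (rule member_le_sum) (auto intro: less_imp_le pp)
    then show ?thesis using ps by simp
  qed
  define v where "v j = P k $ j - Q $ j" for j
  define g where "g t = (\<Sum>j\<in>UNIV. (Q $ j + t * v j) * ln ((Q $ j + t * v j) / Q0 $ j))" for t
  define m where "m = Min (range (\<lambda>j. Q $ j))"
  have m0: "m > 0" unfolding m_def using qp by (subst Min_gr_iff) auto
  have mle: "m \<le> Q $ j" for j unfolding m_def by (rule Min_le) auto
  define d where "d = min m 1"
  have d0: "d > 0" using m0 by (simp add: d_def)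
  have D: "(g has_field_derivative (\<Sum>j\<in>UNIV. v j * ln (Q $ j / Q0 $ j) + v j)) (at 0)"
    unfolding g_def by (intro DERIV_sum dterm qp q0p)
  have "g 0 \<le> g t" if t: "\<bar>0 - t\<bar> < d" for t
  proof -
    define x where "x = Q + t *\<^sub>R (P k - Q)"
    have xj: "x $ j = Q $ j + t * v j" for j by (simp add: x_def v_def)
    have xpos: "x $ j > 0" for j
    proof (cases "t \<ge> 0")
      case True
      then have "t < 1" using t by (simp add: d_def)
      have "x $ j = (1 - t) * Q $ j + t * P k $ j" by (simp add: xj v_def algebra_simps)
      moreover have "(1 - t) * Q $ j > 0" using \<open>t < 1\<close> qp[of j] by simp
      moreover have "t * P k $ j \<ge> 0" using True pp[of j] by simp
      ultimately show ?thesis by linarith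
    next
      case False
      then have "t > - m" using t by (simp add: d_def)
      have "t * P k $ j \<ge> t * 1" using False ple[of j] by (intro mult_left_mono_neg) auto
      moreover have "- t * Q $ j \<ge> 0" using False qp[of j] by (simp add: mult_le_0_iff)
      moreover have "x $ j = Q $ j + (- t) * Q $ j + t * P k $ j" by (simp add: xj v_def algebra_simps)
      ultimately show ?thesis using mle[of j] \<open>t > - m\<close> by linarith
    qed
    have xs: "(\<Sum>j\<in>UNIV. x $ j) = 1"
      using qs ps by (simp add: xj v_def algebra_simps sum.distrib sum_subtractf flip: sum_distrib_left)
    define c' where "c' i = (1 - t) * c i + t * (if i = k then 1 else 0)" for i
    have "(\<Sum>i\<in>I. c' i) = 1" unfolding c'_def using c1 fin k
      by (simp add: sum.distrib flip: sum_distrib_left)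
    moreover have "x = (\<Sum>i\<in>I. c' i *\<^sub>R P i)"
    proof -
      have "(\<Sum>i\<in>I. c' i *\<^sub>R P i) = (1 - t) *\<^sub>R (\<Sum>i\<in>I. c i *\<^sub>R P i) + (\<Sum>i\<in>I. (t * (if i = k then 1 else 0)) *\<^sub>R P i)"
        unfolding c'_def by (simp add: scaleR_add_left sum.distrib scaleR_sum_right)
      also have "(\<Sum>i\<in>I. (t * (if i = k then 1 else 0)) *\<^sub>R P i) = (\<Sum>i\<in>I. if i = k then t *\<^sub>R P k else 0)"
        by (intro sum.cong) auto
      also have "\<dots> = t *\<^sub>R P k" using fin k by simp
      finally show ?thesis unfolding x_def cQ[symmetric] by (simp add: algebra_simps)
    qed
    ultimately have "x \<in> affL P I" using xpos xs unfolding affL_def open_simplex_def by blast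
    then have "KL Q Q0 \<le> KL x Q0" using mn by blast
    then show ?thesis unfolding g_def KL_def by (simp add: xj)
  qed
  then have "(\<Sum>j\<in>UNIV. v j * ln (Q $ j / Q0 $ j) + v j) = 0"
    using DERIV_local_min[OF D d0] by blast
  moreover have "(\<Sum>j\<in>UNIV. v j) = 0" using qs ps by (simp add: v_def sum_subtractf)
  ultimately show ?thesis by (simp add: sum.distrib v_def)
qed

lemma lnd: "(a::real) > 0 \<Longrightarrow> b > 0 \<Longrightarrow> ln (a/b) = ln a - ln b"
  by (simp add: ln_div)

lemma kl_split:
  fixes X Q R :: "real ^ 'n"
  assumes "\<And>j. X $ j > 0" "\<And>j. Q $ j > 0" "\<And>j. R $ j > 0"
  shows "KL X R = KL X Q + (\<Sum>j\<in>UNIV. X $ j * ln (Q $ j / R $ j))"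
  unfolding KL_def sum.distrib[symmetric]
proof (intro sum.cong refl)
  fix j
  show "X $ j * ln (X $ j / R $ j) = X $ j * ln (X $ j / Q $ j) + X $ j * ln (Q $ j / R $ j)"
    using assms(1)[of j] assms(2)[of j] assms(3)[of j] by (simp add: lnd algebra_simps)
qed

lemma out_pos:
  fixes P :: "nat \<Rightarrow> real^'n"
  assumes mu: "mu \<in> closed_simplex m" and rows: "\<forall>i\<in>{1..m}. P i \<in> open_simplex"
  shows "out_dist m P mu \<in> open_simplex"
proof -
  have mn: "\<And>i. i \<in> {1..m} \<Longrightarrow> mu i \<ge> 0" and ms: "(\<Sum>i\<in>{1..m}. mu i) = 1"
    using mu by (auto simp: closed_simplex_def)
  have pp: "\<And>i j. i \<in> {1..m} \<Longrightarrow> P i $ j > 0" and ps: "\<And>i. i \<in> {1..m} \<Longrightarrow> (\<Sum>j\<in>UNIV. P i $ j) = 1"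
    using rows by (auto simp: open_simplex_def)
  obtain i0 where i0: "i0 \<in> {1..m}" "mu i0 > 0"
  proof (rule ccontr)
    assume "\<not> thesis"
    then have "\<forall>i\<in>{1..m}. mu i \<le> 0" using that by force
    then have "(\<Sum>i\<in>{1..m}. mu i) \<le> 0" by (intro sum_nonpos) auto
    then show False using ms by simp
  qed
  have "out_dist m P mu $ j > 0" for j
    unfolding out_dist_def sum_component vector_scaleR_component real_scaleR_def
  proof (rule sum_pos2[OF _ i0(1)])
    show "0 < mu i0 * P i0 $ j" using i0 pp[OF i0(1)] by simp
    show "\<And>i. i \<in> {1..m} \<Longrightarrow> 0 \<le> mu i * P i $ j"
      using pp mn by (simp add: less_imp_le)
  qed simp
  moreover have "(\<Sum>j\<in>UNIV. out_dist m P mu $ j) = 1"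
  proof -
    have "(\<Sum>j\<in>UNIV. \<Sum>i\<in>{1..m}. mu i * P i $ j) = (\<Sum>i\<in>{1..m}. \<Sum>j\<in>UNIV. mu i * P i $ j)"
      by (rule sum.swap)
    also have "\<dots> = (\<Sum>i\<in>{1..m}. mu i)"
      by (intro sum.cong refl) (simp add: ps flip: sum_distrib_left)
    finally show ?thesis using ms by (simp add: out_dist_def)
  qed
  ultimately show ?thesis by (simp add: open_simplex_def)
qed

lemma mi_decomp:
  fixes P :: "nat \<Rightarrow> real^'n"
  assumes mu: "mu \<in> closed_simplex m" and rows: "\<forall>i\<in>{1..m}. P i \<in> open_simplex"
    and Q: "Q \<in> open_simplex"
  shows "mutual_info m P mu = (\<Sum>i\<in>{1..m}. mu i * KL (P i) Q) - KL (out_dist m P mu) Q"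
proof -
  define Om where "Om = out_dist m P mu"
  have op: "\<And>j. Om $ j > 0" using out_pos[OF mu rows] by (simp add: Om_def open_simplex_def)
  have qp: "\<And>j. Q $ j > 0" using Q by (simp add: open_simplex_def)
  have pp: "\<And>i j. i \<in> {1..m} \<Longrightarrow> P i $ j > 0"
    using rows by (auto simp: open_simplex_def)
  have Oj: "Om $ j = (\<Sum>i\<in>{1..m}. mu i * P i $ j)" for j by (simp add: Om_def out_dist_def)
  have "mutual_info m P mu = (\<Sum>i\<in>{1..m}. \<Sum>j\<in>UNIV. mu i * P i $ j * ln (P i $ j / Q $ j)
          - mu i * P i $ j * ln (Om $ j / Q $ j))"
    unfolding mutual_info_def Om_def[symmetric]
  proof (intro sum.cong refl)
    fix i j assume i: "i \<in> {1..m}"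
    show "mu i * P i $ j * ln (P i $ j / Om $ j) = mu i * P i $ j * ln (P i $ j / Q $ j) - mu i * P i $ j * ln (Om $ j / Q $ j)"
      using pp[OF i, of j] op[of j] qp[of j] by (simp add: lnd algebra_simps)
  qed
  also have "\<dots> = (\<Sum>i\<in>{1..m}. mu i * KL (P i) Q) - (\<Sum>j\<in>UNIV. \<Sum>i\<in>{1..m}. mu i * P i $ j * ln (Om $ j / Q $ j))"
    by (simp add: sum_subtractf KL_def sum_distrib_left mult.assoc) (rule sum.swap)
  also have "(\<Sum>j\<in>UNIV. \<Sum>i\<in>{1..m}. mu i * P i $ j * ln (Om $ j / Q $ j)) = KL Om Q"
    unfolding KL_def Oj by (simp add: sum_distrib_right)
  finally show ?thesis by (simp add: Om_def)
qed

theorem theorem20: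
  fixes P :: "nat \<Rightarrow> real ^ 'n"
    and Q0 Q11 Q12 :: "real ^ 'n"
    and lam0 lam11 lam12 :: "nat \<Rightarrow> real"
  assumes rows: "\<forall>i\<in>{1..4}. P i \<in> open_simplex"
    and gp: "general_position 4 P"
    and eq: "is_equidistant 4 P Q0"
    and b0: "is_bary 4 P Q0 lam0"
    and s0: "lam0 1 < 0" "lam0 2 < 0" "lam0 3 \<ge> 0" "lam0 4 \<ge> 0"
    and p11: "is_proj Q0 (affL P {2, 3, 4}) Q11"
    and p12: "is_proj Q0 (affL P {1, 3, 4}) Q12"
    and b11: "is_bary 4 P Q11 lam11"
    and b12: "is_bary 4 P Q12 lam12"
    and s12: "lam12 1 < 0"
    and s11: "lam11 2 \<ge> 0" "lam11 3 \<ge> 0" "lam11 4 \<ge> 0"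
  shows "(\<exists>lam. is_capacity_achieving 4 P lam)
         \<and> (\<forall>lam. is_capacity_achieving 4 P lam \<longrightarrow> out_dist 4 P lam = Q11)
         \<and> capacity 4 P = KL (P 2) Q11"
proof -
  have s4: "{1..4::nat} = {1,2,3,4}" by auto
  have s24: "{2..4::nat} = {2,3,4}" by auto
  have Q0s: "Q0 \<in> open_simplex" using eq by (simp add: is_equidistant_def affL_def)
  have Q11s: "Q11 \<in> open_simplex" using p11 by (simp add: is_proj_def affL_def)
  have Ps: "P i \<in> open_simplex" if "i \<in> {1,2,3,4}" for i using rows that s4 by auto
  have q0p: "\<And>j. Q0 $ j > 0" using Q0s by (simp add: open_simplex_def)
  have q11p: "\<And>j. Q11 $ j > 0" using Q11s by (simp add: open_simplex_def)
  have pp: "\<And>j. P i $ j > 0" if "i \<in> {1,2,3,4}" for i using Ps[OF that] by (simp add: open_simplex_def)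
  define h where "h j = ln (Q11 $ j / Q0 $ j)" for j
  define d where "d = KL Q11 Q0"
  have dh: "d = (\<Sum>j\<in>UNIV. Q11 $ j * h j)" by (simp add: d_def KL_def h_def)
  have orth: "(\<Sum>j\<in>UNIV. P k $ j * h j) = d" if k: "k \<in> {2,3,4}" for k
  proof -
    have "(\<Sum>j\<in>UNIV. (P k $ j - Q11 $ j) * h j) = 0"
      unfolding h_def by (rule proj_orth[OF p11 Q0s _ k Ps]) (use k in auto)
    then show ?thesis by (simp add: dh left_diff_distrib sum_subtractf)
  qed
  have split: "KL (P k) Q0 = KL (P k) Q11 + (\<Sum>j\<in>UNIV. P k $ j * h j)" if k: "k \<in> {1,2,3,4}" for k
    unfolding h_def by (rule kl_split) (use pp[OF k] q0p q11p in auto)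
  have eqd: "KL (P k) Q0 = KL (P 2) Q0" if k: "k \<in> {1,2,3,4}" for k
  proof -
    have "\<forall>i\<in>{1..4}. \<forall>k\<in>{1..4}. KL (P i) Q0 = KL (P k) Q0"
      using eq unfolding is_equidistant_def by blast
    moreover have "k \<in> {1..4}" "(2::nat) \<in> {1..4}" using k by auto
    ultimately show ?thesis by blast
  qed
  define Cs where "Cs = KL (P 2) Q11"
  have C234: "KL (P k) Q11 = Cs" if k: "k \<in> {2,3,4}" for k
  proof -
    have kk: "k \<in> {1,2,3,4}" using k by auto
    show ?thesis unfolding Cs_def
      using split[OF kk] split[of 2] eqd[OF kk] orth[OF k] orth[of 2] by simp
  qed
  define a where "a = (\<Sum>j\<in>UNIV. P 1 $ j * h j)"
  have K1: "KL (P 1) Q11 = Cs - (a - d)"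
    using split[of 1] split[of 2] eqd[of 1] orth[of 2] unfolding Cs_def a_def by simp
  have l0s: "lam0 1 + lam0 2 + lam0 3 + lam0 4 = 1" and Q0e: "Q0 = (\<Sum>i\<in>{1,2,3,4}. lam0 i *\<^sub>R P i)"
    using b0 s4 by (auto simp: is_bary_def)
  have KQ0: "KL Q0 Q11 = - (\<Sum>j\<in>UNIV. Q0 $ j * h j)"
    unfolding KL_def h_def sum_negf[symmetric]
    by (intro sum.cong refl) (use q0p q11p in \<open>simp add: lnd algebra_simps\<close>)
  have "(\<Sum>j\<in>UNIV. Q0 $ j * h j) = lam0 1 * a + lam0 2 * d + lam0 3 * d + lam0 4 * d"
  proof -
    have "(\<Sum>j\<in>UNIV. Q0 $ j * h j) = (\<Sum>j\<in>UNIV. lam0 1 * (P 1 $ j * h j) + lam0 2 * (P 2 $ j * h j)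
        + lam0 3 * (P 3 $ j * h j) + lam0 4 * (P 4 $ j * h j))"
      by (simp add: Q0e algebra_simps)
    also have "\<dots> = lam0 1 * a + lam0 2 * (\<Sum>j\<in>UNIV. P 2 $ j * h j) + lam0 3 * (\<Sum>j\<in>UNIV. P 3 $ j * h j)
        + lam0 4 * (\<Sum>j\<in>UNIV. P 4 $ j * h j)"
      by (simp add: sum.distrib a_def sum_distrib_left)
    finally show ?thesis using orth[of 2] orth[of 3] orth[of 4] by simp
  qed
  moreover have "lam0 2 * d + lam0 3 * d + lam0 4 * d = (1 - lam0 1) * d"
    using l0s by (simp flip: distrib_right)
  ultimately have "KL Q0 Q11 + d = lam0 1 * (d - a)" using KQ0 by (simp add: right_diff_distrib left_diff_distrib)
  moreover have "KL Q0 Q11 \<ge> 0" by (rule gibbs(1)[OF Q0s Q11s])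
  moreover have "d \<ge> 0" unfolding d_def by (rule gibbs(1)[OF Q11s Q0s])
  ultimately have "lam0 1 * (d - a) \<ge> 0" by linarith
  then have "d - a \<le> 0" using s0(1) by (simp add: zero_le_mult_iff)
  then have K1le: "KL (P 1) Q11 \<le> Cs" using K1 by linarith
  have Kle: "KL (P i) Q11 \<le> Cs" if "i \<in> {1..4}" for i
  proof -
    have "i = 1 \<or> i = 2 \<or> i = 3 \<or> i = 4" using that by auto
    then show ?thesis using K1le C234[of 2] C234[of 3] C234[of 4] by auto
  qed
  obtain c :: "nat \<Rightarrow> real" where c1: "c 2 + c 3 + c 4 = 1" and cQ: "Q11 = c 2 *\<^sub>R P 2 + c 3 *\<^sub>R P 3 + c 4 *\<^sub>R P 4"
    using p11 by (auto simp: is_proj_def affL_def add.assoc)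
  have l11s: "lam11 1 + lam11 2 + lam11 3 + lam11 4 = 1"
    and Q11e: "Q11 = lam11 1 *\<^sub>R P 1 + lam11 2 *\<^sub>R P 2 + lam11 3 *\<^sub>R P 3 + lam11 4 *\<^sub>R P 4"
    using b11 unfolding is_bary_def s4 by (simp_all add: add.assoc)
  define e where "e i = lam11 i - c i" for i
  have "(\<Sum>i\<in>{2..4}. e i *\<^sub>R (P i - P 1)) = 0"
  proof -
    have "(\<Sum>i\<in>{2..4}. e i *\<^sub>R (P i - P 1)) $ j = 0" for j
    proof -
      have E: "lam11 1 * P 1 $ j + lam11 2 * P 2 $ j + lam11 3 * P 3 $ j + lam11 4 * P 4 $ j
          = c 2 * P 2 $ j + c 3 * P 3 $ j + c 4 * P 4 $ j"
        using arg_cong[OF Q11e, of "\<lambda>x. x $ j"] arg_cong[OF cQ, of "\<lambda>x. x $ j"] by simp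
      have "(lam11 2 - c 2) * (P 2 $ j - P 1 $ j) + (lam11 3 - c 3) * (P 3 $ j - P 1 $ j)
          + (lam11 4 - c 4) * (P 4 $ j - P 1 $ j) = 0"
        using E l11s c1 by algebra
      then show ?thesis by (simp add: s24 e_def)
    qed
    then show ?thesis by (simp add: vec_eq_iff)
  qed
  then have "\<forall>i\<in>{2..4}. e i = 0" using gp by (simp add: general_position_def)
  then have "lam11 2 = c 2" "lam11 3 = c 3" "lam11 4 = c 4" by (auto simp: e_def)
  then have l1: "lam11 1 = 0" using l11s c1 by linarith
  have lcs: "lam11 \<in> closed_simplex 4"
    using l1 s11 l11s s4 by (auto simp: closed_simplex_def)
  have od11: "out_dist 4 P lam11 = Q11" using b11 by (simp add: is_bary_def out_dist_def)
  have KQQ: "KL Q11 Q11 = 0" using q11p by (simp add: KL_def less_imp_neq[symmetric])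
  have I11: "mutual_info 4 P lam11 = Cs"
  proof -
    have "mutual_info 4 P lam11 = (\<Sum>i\<in>{1..4}. lam11 i * KL (P i) Q11)"
      using mi_decomp[OF lcs rows Q11s] od11 KQQ by simp
    also have "\<dots> = lam11 2 * Cs + lam11 3 * Cs + lam11 4 * Cs"
      using s4 l1 C234[of 2] C234[of 3] C234[of 4] by simp
    also have "\<dots> = (lam11 2 + lam11 3 + lam11 4) * Cs" by (simp add: distrib_right)
    finally show ?thesis using l11s l1 by simp
  qed
  have Ile: "mutual_info 4 P mu \<le> Cs - KL (out_dist 4 P mu) Q11" if mu: "mu \<in> closed_simplex 4" for mu
  proof -
    have "(\<Sum>i\<in>{1..4}. mu i * KL (P i) Q11) \<le> (\<Sum>i\<in>{1..4}. mu i * Cs)"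
      using mu Kle by (intro sum_mono mult_left_mono) (auto simp: closed_simplex_def)
    also have "\<dots> = Cs" using mu by (simp add: closed_simplex_def flip: sum_distrib_right)
    finally show ?thesis using mi_decomp[OF mu rows Q11s] by linarith
  qed
  have Ile2: "mutual_info 4 P mu \<le> Cs" if mu: "mu \<in> closed_simplex 4" for mu
    using Ile[OF mu] gibbs(1)[OF out_pos[OF mu rows] Q11s] by linarith
  have ach: "is_capacity_achieving 4 P lam11"
    using lcs Ile2 I11 by (simp add: is_capacity_achieving_def)
  have uniq: "out_dist 4 P lam = Q11" if "is_capacity_achieving 4 P lam" for lam
  proof -
    have lm: "lam \<in> closed_simplex 4" and ge: "mutual_info 4 P lam11 \<le> mutual_info 4 P lam"
      using that lcs by (auto simp: is_capacity_achieving_def)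
    have "KL (out_dist 4 P lam) Q11 \<le> 0" using Ile[OF lm] ge I11 by linarith
    then have "KL (out_dist 4 P lam) Q11 = 0" using gibbs(1)[OF out_pos[OF lm rows] Q11s] by linarith
    then show ?thesis using gibbs(2)[OF out_pos[OF lm rows] Q11s] by blast
  qed
  have cap: "capacity 4 P = Cs"
    unfolding capacity_def
    by (rule cSup_eq_maximum) (use lcs I11 Ile2 in \<open>auto intro: image_eqI[where x = lam11]\<close>)
  show ?thesis using ach uniq cap by (auto simp: Cs_def)
qed

end
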